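(* Let $M\ge 2$ and $N$ be positive integers, and let $C_0,\dots,C_{N-1}$ be i.i.d. random variables, each uniformly distributed on $\{0,1,\dots,M-1\}$. For $m\in\{0,\dots,M-1\}$ and $n\in\{0,\dots,N-1\}$ let $\zeta_{n,m}=1$ if $C_n=m$ and $\zeta_{n,m}=0$ otherwise, and for an integer $\Delta q$ let $\lambda_m^{\Delta q}=\frac{M}{N}\sum_{n=0}^{N-1}\zeta_{n,m}e^{j2\pi\frac{\Delta q}{N}n}$. Define $\bar\sigma_m^{\Delta q}=|\lambda_m^0-1|$ if $\Delta q=0$ and $\bar\sigma_m^{\Delta q}=|\lambda_m^{\Delta q}|$ if $\Delta q\neq0$. Then for every $0<\epsilon\le1$, every $m\in\{0,\dots,M-1\}$ and every $\Delta q\in\{0,1,\dots,\lfloor N/2\rfloor\}$, $$\mathbb{P}\left(\bar\sigma_m^{\Delta q}>\sqrt{\frac{M-1}{N}}+\epsilon\right)<e^{-\frac{N}{4(M-1)}\epsilon^2}.$$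
   Context: $j$ denotes the imaginary unit. The quantities $\bar\sigma_m^{\Delta q}$ are the singular values of $\bm\Psi_{q_1}^H\bm\Psi_{q_2}$ (minus the identity when $q_1=q_2$) for $\Delta q=q_2-q_1$, where $[\bm\psi_{p,q}]_n=\frac{1}{\sqrt N}e^{j\frac{2\pi p}{M}C_n+j\frac{2\pi q}{N}n}$; this interpretation is not needed for the statement. *)

theory Defs
  imports "HOL-Probability.Probability"
begin

text \<open>Joint law of the i.i.d. code symbols C_0..C_{N-1}, each uniform on {0..M-1}:
  the uniform distribution on the (finite) set of functions {0..N-1} -> {0..M-1}
  (extensional, i.e. undefined outside {0..N-1}).\<close>
definition code_pmf :: "nat \<Rightarrow> nat \<Rightarrow> (nat \<Rightarrow> nat) pmf" where
  "code_pmf M N = pmf_of_set (PiE {..<N} (\<lambda>_. {..<M}))"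

definition zeta :: "(nat \<Rightarrow> nat) \<Rightarrow> nat \<Rightarrow> nat \<Rightarrow> real" where
  "zeta C n m = (if C n = m then 1 else 0)"

definition lambda_coef :: "nat \<Rightarrow> nat \<Rightarrow> (nat \<Rightarrow> nat) \<Rightarrow> nat \<Rightarrow> int \<Rightarrow> complex" where
  "lambda_coef M N C m dq =
     complex_of_real (real M / real N) *
     (\<Sum>n<N. complex_of_real (zeta C n m) *
        exp (\<i> * complex_of_real (2 * pi * real_of_int dq * real n / real N)))"

definition sigma_bar :: "nat \<Rightarrow> nat \<Rightarrow> (nat \<Rightarrow> nat) \<Rightarrow> nat \<Rightarrow> int \<Rightarrow> real" where
  "sigma_bar M N C m dq =
     (if dq = 0 then cmod (lambda_coef M N C m 0 - 1) else cmod (lambda_coef M N C m dq))"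

end

theory Submission
  imports Defs
begin

definition PS :: "nat \<Rightarrow> nat \<Rightarrow> (nat \<Rightarrow> nat) set" where
  "PS M n = PiE {..<n} (\<lambda>_. {..<M})"

definition avg :: "nat \<Rightarrow> nat \<Rightarrow> ((nat \<Rightarrow> nat) \<Rightarrow> 'a::field_char_0) \<Rightarrow> 'a" where
  "avg M n f = (\<Sum>C\<in>PS M n. f C) / of_nat (M ^ n)"

definition mean :: "nat \<Rightarrow> (nat \<Rightarrow> 'a::field_char_0) \<Rightarrow> 'a" where
  "mean M \<phi> = (\<Sum>a<M. \<phi> a) / of_nat M"

lemma finite_PS[simp]: "finite (PS M n)"
  unfolding PS_def by (simp add: finite_PiE)

lemma card_PS: "card (PS M n) = M ^ n"
  unfolding PS_def by (simp add: card_PiE)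

lemma PS_upd_Suc: "C \<in> PS M n \<Longrightarrow> a < M \<Longrightarrow> C(n := a) \<in> PS M (Suc n)"
  unfolding PS_def by (auto simp: PiE_def extensional_def Pi_def)

lemma PS_upd: "C \<in> PS M n \<Longrightarrow> k < n \<Longrightarrow> b < M \<Longrightarrow> C(k := b) \<in> PS M n"
  unfolding PS_def by (auto simp: PiE_def extensional_def Pi_def)

lemma PS_val: "C \<in> PS M n \<Longrightarrow> k < n \<Longrightarrow> C k < M"
  unfolding PS_def by (auto simp: PiE_def Pi_def)

lemma PS_out: "C \<in> PS M n \<Longrightarrow> C n = undefined"
  unfolding PS_def by (auto simp: PiE_def extensional_def)

lemma sum_PS_Suc:
  "sum F (PS M (Suc n)) = (\<Sum>C\<in>PS M n. \<Sum>a<M. F (C(n := a)))"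
proof -
  have eq: "PS M (Suc n) = (\<lambda>(y, g). g(n := y)) ` ({..<M} \<times> PS M n)"
    unfolding PS_def lessThan_Suc by (rule PiE_insert_eq)
  have inj: "inj_on (\<lambda>(y, g). g(n := y)) ({..<M} \<times> PS M n)"
  proof (rule inj_onI, clarify)
    fix y g y' g'
    assume g: "g \<in> PS M n" and g': "g' \<in> PS M n" and e: "g(n := y) = g'(n := y')"
    have "y = y'" using fun_cong[OF e, of n] by simp
    moreover have "g = g'"
    proof
      fix x show "g x = g' x"
        using fun_cong[OF e, of x] PS_out[OF g] PS_out[OF g'] by (cases "x = n") auto
    qed
    ultimately show "y = y' \<and> g = g'" by simp
  qed
  have "sum F (PS M (Suc n)) = (\<Sum>(y, g)\<in>{..<M} \<times> PS M n. F (g(n := y)))"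
    unfolding eq by (subst sum.reindex[OF inj]) (simp add: case_prod_beta comp_def)
  also have "\<dots> = (\<Sum>y<M. \<Sum>g\<in>PS M n. F (g(n := y)))"
    by (rule sum.cartesian_product[symmetric])
  also have "\<dots> = (\<Sum>C\<in>PS M n. \<Sum>a<M. F (C(n := a)))"
    by (rule sum.swap)
  finally show ?thesis .
qed

lemma avg_Suc:
  assumes "M > 0"
  shows "avg M (Suc n) F = avg M n (\<lambda>C. mean M (\<lambda>a. F (C(n := a))))"
  using assms unfolding avg_def mean_def sum_PS_Suc
  by (simp add: sum_divide_distrib[symmetric] divide_divide_eq_left mult.commute)

lemma avg_const: "M > 0 \<Longrightarrow> avg M n (\<lambda>_. c) = c"
  unfolding avg_def by (simp add: card_PS)

lemma mean_const: "M > 0 \<Longrightarrow> mean M (\<lambda>_. c) = c"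
  unfolding mean_def by simp

lemma avg_add: "avg M n (\<lambda>C. f C + g C) = avg M n f + avg M n g"
  unfolding avg_def by (simp add: sum.distrib add_divide_distrib)

lemma avg_diff: "avg M n (\<lambda>C. f C - g C) = avg M n f - avg M n g"
  unfolding avg_def by (simp add: sum_subtractf diff_divide_distrib)

lemma avg_cmult: "avg M n (\<lambda>C. c * f C) = c * avg M n f"
  unfolding avg_def by (simp add: sum_distrib_left[symmetric])

lemma avg_sum: "avg M n (\<lambda>C. \<Sum>i\<in>I. f i C) = (\<Sum>i\<in>I. avg M n (f i))"
  unfolding avg_def by (simp add: sum.swap[of _ I] sum_divide_distrib)

lemma mean_add: "mean M (\<lambda>a. f a + g a) = mean M f + mean M g"
  unfolding mean_def by (simp add: sum.distrib add_divide_distrib)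

lemma mean_diff: "mean M (\<lambda>a. f a - g a) = mean M f - mean M g"
  unfolding mean_def by (simp add: sum_subtractf diff_divide_distrib)

lemma mean_cmult: "mean M (\<lambda>a. c * f a) = c * mean M f"
  unfolding mean_def by (simp add: sum_distrib_left[symmetric])

lemma avg_mono:
  fixes f g :: "(nat \<Rightarrow> nat) \<Rightarrow> real"
  shows "(\<And>C. C \<in> PS M n \<Longrightarrow> f C \<le> g C) \<Longrightarrow> avg M n f \<le> avg M n g"
  unfolding avg_def by (intro divide_right_mono sum_mono) auto

lemma mean_mono:
  fixes f g :: "nat \<Rightarrow> real"
  shows "(\<And>a. a < M \<Longrightarrow> f a \<le> g a) \<Longrightarrow> mean M f \<le> mean M g"
  unfolding mean_def by (intro divide_right_mono sum_mono) auto

lemma avg_coord: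
  assumes "M > 0" "k < n"
  shows "avg M n (\<lambda>C. \<phi> (C k)) = mean M \<phi>"
  using assms(2)
proof (induction n)
  case 0 then show ?case by simp
next
  case (Suc n)
  show ?case
  proof (cases "k = n")
    case True
    then show ?thesis using assms(1) by (simp add: avg_Suc avg_const)
  next
    case False
    then have "k < n" using Suc.prems by simp
    then show ?thesis using assms(1) False Suc.IH by (simp add: avg_Suc mean_const)
  qed
qed

lemma mean_pyth:
  fixes x :: "nat \<Rightarrow> real"
  assumes "M > 0"
  shows "mean M (\<lambda>a. (x a - z)\<^sup>2) = mean M (\<lambda>a. (x a - mean M x)\<^sup>2) + (mean M x - z)\<^sup>2"
proof -
  let ?g = "mean M x"
  have "(\<lambda>a. (x a - z)\<^sup>2) = (\<lambda>a. (x a - ?g)\<^sup>2 + (2 * (?g - z)) * (x a - ?g) + (?g - z)\<^sup>2)"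
    by (rule ext) (simp add: power2_eq_square algebra_simps)
  then have "mean M (\<lambda>a. (x a - z)\<^sup>2) = mean M (\<lambda>a. (x a - ?g)\<^sup>2) + (2 * (?g - z)) * mean M (\<lambda>a. x a - ?g) + (?g - z)\<^sup>2"
    using assms by (simp add: mean_add mean_cmult mean_const)
  moreover have "mean M (\<lambda>a. x a - ?g) = 0" using assms by (simp add: mean_diff mean_const)
  ultimately show ?thesis by simp
qed

lemma mean_pyth_c:
  fixes x :: "nat \<Rightarrow> complex"
  assumes "M > 0"
  shows "mean M (\<lambda>a. (cmod (x a - z))\<^sup>2) = mean M (\<lambda>a. (cmod (x a - mean M x))\<^sup>2) + (cmod (mean M x - z))\<^sup>2"
proof -
  have Re: "Re (mean M x) = mean M (\<lambda>a. Re (x a))" unfolding mean_def by (simp add: Re_divide_of_nat)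
  have Im: "Im (mean M x) = mean M (\<lambda>a. Im (x a))" unfolding mean_def by (simp add: Im_divide_of_nat)
  show ?thesis
    unfolding cmod_power2 using mean_pyth[OF assms, of "\<lambda>a. Re (x a)" "Re z"] mean_pyth[OF assms, of "\<lambda>a. Im (x a)" "Im z"]
    by (simp add: mean_add Re Im)
qed

lemma exp_le_quad:
  fixes y :: real
  assumes "y \<le> 1"
  shows "exp y \<le> 1 + y + y\<^sup>2"
proof (cases "0 \<le> y")
  case True then show ?thesis using exp_bound assms by simp
next
  case False
  define u where "u = - y"
  have u: "u > 0" using False u_def by simp
  have "(1 + u/2)\<^sup>2 \<le> (exp (u/2))\<^sup>2"
    using u by (intro power_mono) (auto simp: add.commute)
  also have "(exp (u/2))\<^sup>2 = exp u" by (simp add: power2_eq_square exp_add[symmetric])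
  finally have e: "1 + u + u\<^sup>2/4 \<le> exp u" by (simp add: power2_eq_square algebra_simps)
  have pos: "0 < 1 + u + u\<^sup>2/4" using u by (simp add: add_pos_nonneg)
  have "exp y = 1 / exp u" using u_def by (simp add: exp_minus field_simps)
  also have "\<dots> \<le> 1 / (1 + u + u\<^sup>2/4)"
    using e pos by (intro divide_left_mono) auto
  also have "\<dots> \<le> 1 - u + u\<^sup>2"
  proof -
    have "1 \<le> (1 - u + u\<^sup>2) * (1 + u + u\<^sup>2/4)"
    proof -
      have "(1 - u + u\<^sup>2) * (1 + u + u\<^sup>2/4) = 1 + u\<^sup>2/4 + 3 * u^3/4 + u^4/4"
        by (simp add: power2_eq_square power3_eq_cube power4_eq_xxxx field_simps)
      moreover have "0 \<le> u\<^sup>2/4 + 3 * u^3/4 + u^4/4" using u by simp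
      ultimately show ?thesis by linarith
    qed
    then show ?thesis using pos by (simp add: divide_le_eq)
  qed
  finally show ?thesis using u_def by (simp add: power2_eq_square)
qed

lemma mean_abs_le:
  fixes x :: "nat \<Rightarrow> complex"
  shows "cmod (mean M x) \<le> mean M (\<lambda>a. cmod (x a))"
  unfolding mean_def by (simp add: norm_divide divide_right_mono norm_sum)

lemma mean_abs_le_r:
  fixes x :: "nat \<Rightarrow> real"
  shows "\<bar>mean M x\<bar> \<le> mean M (\<lambda>a. \<bar>x a\<bar>)"
  unfolding mean_def by (simp add: divide_right_mono sum_abs)

lemma onestep:
  fixes x c :: "nat \<Rightarrow> real"
  assumes M: "M > 0" and xH: "\<And>a. a < M \<Longrightarrow> \<bar>x a - H\<bar> \<le> c a"
    and c: "\<And>a. a < M \<Longrightarrow> 0 \<le> c a \<and> c a \<le> \<mu>"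
    and s: "mean M (\<lambda>a. (c a)\<^sup>2) \<le> s" and l: "0 \<le> l" "2 * l * \<mu> \<le> 1"
  shows "mean M (\<lambda>a. exp (l * (x a - mean M x))) \<le> 1 + l\<^sup>2 * s"
proof -
  let ?g = "mean M x"
  have gH: "\<bar>?g - H\<bar> \<le> \<mu>"
  proof -
    have "?g - H = mean M (\<lambda>a. x a - H)" using M by (simp add: mean_diff mean_const)
    then have "\<bar>?g - H\<bar> \<le> mean M (\<lambda>a. \<bar>x a - H\<bar>)" by (simp add: mean_abs_le_r)
    also have "\<dots> \<le> mean M (\<lambda>_. \<mu>)" using xH c by (intro mean_mono) (metis order_trans)
    finally show ?thesis using M by (simp add: mean_const)
  qed
  have step: "exp (l * (x a - ?g)) \<le> 1 + l * (x a - ?g) + l\<^sup>2 * (x a - ?g)\<^sup>2" if a: "a < M" for a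
  proof -
    have "x a - ?g \<le> 2 * \<mu>" using xH[OF a] c[OF a] gH by linarith
    then have "l * (x a - ?g) \<le> l * (2 * \<mu>)" using l by (intro mult_left_mono) auto
    then have "l * (x a - ?g) \<le> 1" using l by linarith
    from exp_le_quad[OF this] show ?thesis by (simp add: power_mult_distrib)
  qed
  have "mean M (\<lambda>a. exp (l * (x a - ?g))) \<le> mean M (\<lambda>a. 1 + l * (x a - ?g) + l\<^sup>2 * (x a - ?g)\<^sup>2)"
    using step by (rule mean_mono)
  also have "\<dots> = 1 + l * mean M (\<lambda>a. x a - ?g) + l\<^sup>2 * mean M (\<lambda>a. (x a - ?g)\<^sup>2)"
    using M by (simp add: mean_add mean_cmult mean_const)
  also have "mean M (\<lambda>a. x a - ?g) = 0" using M by (simp add: mean_diff mean_const)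
  also have "mean M (\<lambda>a. (x a - ?g)\<^sup>2) \<le> mean M (\<lambda>a. (x a - H)\<^sup>2)"
    using mean_pyth[OF M, of x H] by simp
  also have "\<dots> \<le> mean M (\<lambda>a. (c a)\<^sup>2)"
  proof (rule mean_mono)
    fix a assume a: "a < M"
    have "\<bar>x a - H\<bar>\<^sup>2 \<le> (c a)\<^sup>2" using xH[OF a] by (intro power_mono) auto
    then show "(x a - H)\<^sup>2 \<le> (c a)\<^sup>2" by simp
  qed
  also have "\<dots> \<le> s" by (rule s)
  finally show ?thesis using l by (simp add: mult_left_mono)
qed

lemma var_bound:
  fixes F :: "(nat \<Rightarrow> nat) \<Rightarrow> complex" and c :: "nat \<Rightarrow> real"
  assumes M: "M > 0"
    and s: "mean M (\<lambda>a. (c a)\<^sup>2) \<le> s"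
    and hyp: "\<forall>k<n. \<exists>h. (\<forall>C\<in>PS M n. \<forall>b<M. h (C(k := b)) = h C) \<and>
                         (\<forall>C\<in>PS M n. cmod (F C - h C) \<le> c (C k))"
  shows "avg M n (\<lambda>C. (cmod (F C - avg M n F))\<^sup>2) \<le> real n * s"
  using hyp
proof (induction n arbitrary: F)
  case 0
  then show ?case by (simp add: avg_def PS_def)
next
  case (Suc n)
  define G where "G C = mean M (\<lambda>a. F (C(n := a)))" for C
  have EF: "avg M (Suc n) F = avg M n G" unfolding G_def[abs_def] by (rule avg_Suc[OF M])
  have hypG: "\<forall>k<n. \<exists>h. (\<forall>C\<in>PS M n. \<forall>b<M. h (C(k := b)) = h C) \<and>
                         (\<forall>C\<in>PS M n. cmod (G C - h C) \<le> c (C k))"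
  proof (intro allI impI)
    fix k assume k: "k < n"
    obtain h where h1: "\<forall>C\<in>PS M (Suc n). \<forall>b<M. h (C(k := b)) = h C"
      and h2: "\<forall>C\<in>PS M (Suc n). cmod (F C - h C) \<le> c (C k)"
      using Suc.prems[rule_format, OF less_SucI[OF k]] by blast
    define h' where "h' C = mean M (\<lambda>a. h (C(n := a)))" for C
    show "\<exists>h. (\<forall>C\<in>PS M n. \<forall>b<M. h (C(k := b)) = h C) \<and>
                         (\<forall>C\<in>PS M n. cmod (G C - h C) \<le> c (C k))"
    proof (intro exI[of _ h'] conjI ballI allI impI)
      fix C b assume C: "C \<in> PS M n" and b: "b < M"
      have "\<And>a. a < M \<Longrightarrow> h (C(k := b, n := a)) = h (C(n := a))"
      proof -
        fix a assume a: "a < M"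
        have "C(k := b, n := a) = (C(n := a))(k := b)" using k by (simp add: fun_upd_twist)
        then show "h (C(k := b, n := a)) = h (C(n := a))"
          using h1 PS_upd_Suc[OF C a] b by simp
      qed
      then show "h' (C(k := b)) = h' C" unfolding h'_def mean_def by simp
    next
      fix C assume C: "C \<in> PS M n"
      have eqG: "G C - h' C = mean M (\<lambda>a. F (C(n := a)) - h (C(n := a)))"
        unfolding G_def h'_def by (simp add: mean_diff)
      have "cmod (G C - h' C) \<le> mean M (\<lambda>a. cmod (F (C(n := a)) - h (C(n := a))))"
        unfolding eqG by (rule mean_abs_le)
      also have "\<dots> \<le> mean M (\<lambda>a. c (C k))"
      proof (rule mean_mono)
        fix a assume a: "a < M"
        show "cmod (F (C(n := a)) - h (C(n := a))) \<le> c (C k)"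
          using h2 PS_upd_Suc[OF C a] k by fastforce
      qed
      finally show "cmod (G C - h' C) \<le> c (C k)" using M by (simp add: mean_const)
    qed
  qed
  obtain hn where hn1: "\<forall>C\<in>PS M (Suc n). \<forall>b<M. hn (C(n := b)) = hn C"
    and hn2: "\<forall>C\<in>PS M (Suc n). cmod (F C - hn C) \<le> c (C n)"
    using Suc.prems by blast
  have inner: "mean M (\<lambda>a. (cmod (F (C(n := a)) - G C))\<^sup>2) \<le> s" if C: "C \<in> PS M n" for C
  proof -
    define H where "H = hn (C(n := 0))"
    have C0: "C(n := 0) \<in> PS M (Suc n)" using PS_upd_Suc[OF C] M by simp
    have HH: "hn (C(n := a)) = H" if a: "a < M" for a
    proof -
      have "hn ((C(n := 0))(n := a)) = hn (C(n := 0))" using hn1 C0 a by blast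
      then show ?thesis unfolding H_def by simp
    qed
    have "mean M (\<lambda>a. (cmod (F (C(n := a)) - G C))\<^sup>2) \<le> mean M (\<lambda>a. (cmod (F (C(n := a)) - H))\<^sup>2)"
      using mean_pyth_c[OF M, of "\<lambda>a. F (C(n := a))" H] unfolding G_def by simp
    also have "\<dots> \<le> mean M (\<lambda>a. (c a)\<^sup>2)"
    proof (rule mean_mono)
      fix a assume a: "a < M"
      have "cmod (F (C(n := a)) - H) \<le> c a"
        using hn2 PS_upd_Suc[OF C a] HH[OF a] by fastforce
      then show "(cmod (F (C(n := a)) - H))\<^sup>2 \<le> (c a)\<^sup>2" by (intro power_mono) auto
    qed
    finally show ?thesis using s by linarith
  qed
  have "avg M (Suc n) (\<lambda>C. (cmod (F C - avg M (Suc n) F))\<^sup>2)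
      = avg M n (\<lambda>C. mean M (\<lambda>a. (cmod (F (C(n := a)) - avg M n G))\<^sup>2))"
    using M by (simp add: avg_Suc EF)
  also have "\<dots> = avg M n (\<lambda>C. mean M (\<lambda>a. (cmod (F (C(n := a)) - G C))\<^sup>2) + (cmod (G C - avg M n G))\<^sup>2)"
  proof -
    have "mean M (\<lambda>a. (cmod (F (C(n := a)) - avg M n G))\<^sup>2) = mean M (\<lambda>a. (cmod (F (C(n := a)) - G C))\<^sup>2) + (cmod (G C - avg M n G))\<^sup>2" for C
      using mean_pyth_c[OF M, of "\<lambda>a. F (C(n := a))" "avg M n G"] unfolding G_def by simp
    then show ?thesis by simp
  qed
  also have "\<dots> = avg M n (\<lambda>C. mean M (\<lambda>a. (cmod (F (C(n := a)) - G C))\<^sup>2)) + avg M n (\<lambda>C. (cmod (G C - avg M n G))\<^sup>2)"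
    by (rule avg_add)
  also have "\<dots> \<le> avg M n (\<lambda>_. s) + real n * s"
    using inner Suc.IH[OF hypG] by (intro add_mono avg_mono) auto
  finally show ?case using M by (simp add: avg_const algebra_simps)
qed

lemma mgf_bound:
  fixes f :: "(nat \<Rightarrow> nat) \<Rightarrow> real" and c :: "nat \<Rightarrow> real"
  assumes M: "M > 0"
    and c: "\<And>a. a < M \<Longrightarrow> 0 \<le> c a \<and> c a \<le> \<mu>"
    and s: "mean M (\<lambda>a. (c a)\<^sup>2) \<le> s" and l: "0 \<le> l" "2 * l * \<mu> \<le> 1"
    and hyp: "\<forall>k<n. \<exists>h. (\<forall>C\<in>PS M n. \<forall>b<M. h (C(k := b)) = h C) \<and>
                         (\<forall>C\<in>PS M n. \<bar>f C - h C\<bar> \<le> c (C k))"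
  shows "avg M n (\<lambda>C. exp (l * (f C - avg M n f))) \<le> (1 + l\<^sup>2 * s) ^ n"
  using hyp
proof (induction n arbitrary: f)
  case 0
  then show ?case by (simp add: avg_def PS_def)
next
  case (Suc n)
  define G where "G C = mean M (\<lambda>a. f (C(n := a)))" for C
  have EF: "avg M (Suc n) f = avg M n G" unfolding G_def[abs_def] by (rule avg_Suc[OF M])
  have hypG: "\<forall>k<n. \<exists>h. (\<forall>C\<in>PS M n. \<forall>b<M. h (C(k := b)) = h C) \<and>
                         (\<forall>C\<in>PS M n. \<bar>G C - h C\<bar> \<le> c (C k))"
  proof (intro allI impI)
    fix k assume k: "k < n"
    obtain h where h1: "\<forall>C\<in>PS M (Suc n). \<forall>b<M. h (C(k := b)) = h C"
      and h2: "\<forall>C\<in>PS M (Suc n). \<bar>f C - h C\<bar> \<le> c (C k)"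
      using Suc.prems[rule_format, OF less_SucI[OF k]] by blast
    define h' where "h' C = mean M (\<lambda>a. h (C(n := a)))" for C
    show "\<exists>h. (\<forall>C\<in>PS M n. \<forall>b<M. h (C(k := b)) = h C) \<and>
                         (\<forall>C\<in>PS M n. \<bar>G C - h C\<bar> \<le> c (C k))"
    proof (intro exI[of _ h'] conjI ballI allI impI)
      fix C b assume C: "C \<in> PS M n" and b: "b < M"
      have "\<And>a. a < M \<Longrightarrow> h (C(k := b, n := a)) = h (C(n := a))"
      proof -
        fix a assume a: "a < M"
        have "C(k := b, n := a) = (C(n := a))(k := b)" using k by (simp add: fun_upd_twist)
        then show "h (C(k := b, n := a)) = h (C(n := a))"
          using h1 PS_upd_Suc[OF C a] b by simp
      qed
      then show "h' (C(k := b)) = h' C" unfolding h'_def mean_def by simp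
    next
      fix C assume C: "C \<in> PS M n"
      have eqG: "G C - h' C = mean M (\<lambda>a. f (C(n := a)) - h (C(n := a)))"
        unfolding G_def h'_def by (simp add: mean_diff)
      have "\<bar>G C - h' C\<bar> \<le> mean M (\<lambda>a. \<bar>f (C(n := a)) - h (C(n := a))\<bar>)"
        unfolding eqG by (rule mean_abs_le_r)
      also have "\<dots> \<le> mean M (\<lambda>a. c (C k))"
      proof (rule mean_mono)
        fix a assume a: "a < M"
        show "\<bar>f (C(n := a)) - h (C(n := a))\<bar> \<le> c (C k)"
          using h2 PS_upd_Suc[OF C a] k by fastforce
      qed
      finally show "\<bar>G C - h' C\<bar> \<le> c (C k)" using M by (simp add: mean_const)
    qed
  qed
  obtain hn where hn1: "\<forall>C\<in>PS M (Suc n). \<forall>b<M. hn (C(n := b)) = hn C"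
    and hn2: "\<forall>C\<in>PS M (Suc n). \<bar>f C - hn C\<bar> \<le> c (C n)"
    using Suc.prems by blast
  have inner: "mean M (\<lambda>a. exp (l * (f (C(n := a)) - G C))) \<le> 1 + l\<^sup>2 * s" if C: "C \<in> PS M n" for C
  proof -
    define H where "H = hn (C(n := 0))"
    have C0: "C(n := 0) \<in> PS M (Suc n)" using PS_upd_Suc[OF C] M by simp
    have HH: "hn (C(n := a)) = H" if a: "a < M" for a
    proof -
      have "hn ((C(n := 0))(n := a)) = hn (C(n := 0))" using hn1 C0 a by blast
      then show ?thesis unfolding H_def by simp
    qed
    show ?thesis unfolding G_def
    proof (rule onestep[OF M _ c s l])
      fix a assume a: "a < M"
      show "\<bar>f (C(n := a)) - H\<bar> \<le> c a"
        using hn2 PS_upd_Suc[OF C a] HH[OF a] by fastforce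
    qed
  qed
  have "avg M (Suc n) (\<lambda>C. exp (l * (f C - avg M (Suc n) f)))
      = avg M n (\<lambda>C. mean M (\<lambda>a. exp (l * (f (C(n := a)) - avg M n G))))"
    using M by (simp add: avg_Suc EF)
  also have "\<dots> = avg M n (\<lambda>C. exp (l * (G C - avg M n G)) * mean M (\<lambda>a. exp (l * (f (C(n := a)) - G C))))"
  proof -
    have "\<And>C a. exp (l * (f (C(n := a)) - avg M n G)) = exp (l * (G C - avg M n G)) * exp (l * (f (C(n := a)) - G C))"
      by (simp add: exp_add[symmetric] algebra_simps)
    then show ?thesis by (simp add: mean_cmult)
  qed
  also have "\<dots> \<le> avg M n (\<lambda>C. exp (l * (G C - avg M n G)) * (1 + l\<^sup>2 * s))"
    using inner by (intro avg_mono mult_left_mono) auto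
  also have "\<dots> = (1 + l\<^sup>2 * s) * avg M n (\<lambda>C. exp (l * (G C - avg M n G)))"
    by (simp add: avg_cmult[symmetric] mult.commute)
  also have "\<dots> \<le> (1 + l\<^sup>2 * s) * (1 + l\<^sup>2 * s) ^ n"
  proof (rule mult_left_mono[OF Suc.IH[OF hypG]])
    have "0 \<le> mean M (\<lambda>a. (c a)\<^sup>2)" unfolding mean_def by (simp add: sum_nonneg)
    then show "0 \<le> 1 + l\<^sup>2 * s" using s by (simp add: add_nonneg_nonneg)
  qed
  finally show ?case by simp
qed

lemma geom_zero:
  fixes N :: nat and dq :: int
  assumes N: "N > 0" and d: "0 < dq" "dq < int N"
  shows "(\<Sum>n<N. exp (\<i> * complex_of_real (2 * pi * real_of_int dq * real n / real N))) = 0"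
proof -
  define x where "x = 2 * pi * real_of_int dq / real N"
  define w where "w = exp (\<i> * complex_of_real x)"
  have e: "exp (\<i> * complex_of_real (2 * pi * real_of_int dq * real n / real N)) = w ^ n" for n
  proof -
    have "\<i> * complex_of_real (2 * pi * real_of_int dq * real n / real N) = of_nat n * (\<i> * complex_of_real x)"
      unfolding x_def by (simp add: field_simps)
    then show ?thesis unfolding w_def by (simp add: exp_of_nat_mult)
  qed
  have wN: "w ^ N = 1"
  proof -
    have "w ^ N = exp (of_nat N * (\<i> * complex_of_real x))" unfolding w_def by (simp add: exp_of_nat_mult)
    also have "of_nat N * (\<i> * complex_of_real x) = (2 * of_int dq * pi) * \<i>"
      unfolding x_def using N by (simp add: field_simps)
    also have "exp \<dots> = 1" by (rule exp_integer_2pi) simp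
    finally show ?thesis .
  qed
  have w1: "w \<noteq> 1"
  proof
    assume "w = 1"
    then obtain k :: int where k: "x = of_int (2 * k) * pi"
      unfolding w_def exp_eq_1 by auto
    then have "real_of_int dq = real_of_int k * real N"
      unfolding x_def using N by (simp add: field_simps)
    then have kk: "dq = k * int N" by (metis of_int_eq_iff of_int_mult of_int_of_nat_eq)
    show False
    proof (cases "k \<ge> 1")
      case True
      then have "k * int N \<ge> int N" using N by simp
      then show False using kk d by linarith
    next
      case False
      then have "k \<le> 0" by simp
      then have "k * int N \<le> 0" using N by (simp add: mult_nonpos_nonneg)
      then show False using kk d by linarith
    qed
  qed
  show ?thesis unfolding e using wN w1 by (simp add: sum_gp_strict)
qed

lemma lambda_upd:
  assumes k: "k < N"
  shows "lambda_coef M N (C(k := b)) m dq = lambda_coef M N C m dq +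
     complex_of_real (real M / real N) * (complex_of_real (zeta (C(k := b)) k m) - complex_of_real (zeta C k m)) *
       exp (\<i> * complex_of_real (2 * pi * real_of_int dq * real k / real N))"
proof -
  define E where "E n = exp (\<i> * complex_of_real (2 * pi * real_of_int dq * real n / real N))" for n
  have kin: "k \<in> {..<N}" using k by simp
  have rest: "(\<Sum>n\<in>{..<N} - {k}. complex_of_real (zeta (C(k := b)) n m) * E n) =
              (\<Sum>n\<in>{..<N} - {k}. complex_of_real (zeta C n m) * E n)"
    by (rule sum.cong) (auto simp: zeta_def)
  have "lambda_coef M N (C(k := b)) m dq = complex_of_real (real M / real N) *
     (complex_of_real (zeta (C(k := b)) k m) * E k + (\<Sum>n\<in>{..<N} - {k}. complex_of_real (zeta (C(k := b)) n m) * E n))"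
    unfolding lambda_coef_def E_def by (simp add: sum.remove[OF _ kin])
  moreover have "lambda_coef M N C m dq = complex_of_real (real M / real N) *
     (complex_of_real (zeta C k m) * E k + (\<Sum>n\<in>{..<N} - {k}. complex_of_real (zeta C n m) * E n))"
    unfolding lambda_coef_def E_def by (simp add: sum.remove[OF _ kin])
  ultimately show ?thesis unfolding rest E_def[symmetric] by (simp add: algebra_simps)
qed

lemma sum_if_eq:
  fixes A B :: "'a::comm_ring_1"
  assumes "m < M"
  shows "(\<Sum>a<M. if a = m then A else B) = A + of_nat (M - 1) * B"
proof -
  have "(\<Sum>a<M. if a = m then A else B) = (\<Sum>a<M. B + (if a = m then A - B else 0))"
    by (rule sum.cong) auto
  also have "\<dots> = of_nat M * B + (A - B)" using assms by (simp add: sum.distrib)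
  also have "\<dots> = A + of_nat (M - 1) * B" using assms
    by (cases M) (auto simp: algebra_simps)
  finally show ?thesis .
qed

lemma one_plus_less_exp:
  fixes u :: real
  assumes "u > 0"
  shows "1 + u < exp u"
proof -
  have "(1 + u/2)\<^sup>2 \<le> (exp (u/2))\<^sup>2"
    using assms by (intro power_mono) (auto simp: add.commute)
  also have "(exp (u/2))\<^sup>2 = exp u" by (simp add: power2_eq_square exp_add[symmetric])
  finally have "1 + u + u\<^sup>2/4 \<le> exp u" by (simp add: power2_eq_square algebra_simps)
  moreover have "u\<^sup>2/4 > 0" using assms by simp
  ultimately show ?thesis by linarith
qed

theorem theorem2:
  fixes M N m :: nat and dq :: int and \<epsilon> :: real
  assumes "M \<ge> 2" and "N > 0"
    and "0 < \<epsilon>" and "\<epsilon> \<le> 1"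
    and "m < M"
    and "0 \<le> dq" and "dq \<le> \<lfloor>real N / 2\<rfloor>"
  shows "measure_pmf.prob (code_pmf M N)
           {C. sigma_bar M N C m dq > sqrt ((real M - 1) / real N) + \<epsilon>}
         < exp (- (real N / (4 * (real M - 1))) * \<epsilon>\<^sup>2)"
proof -
  note M2 = assms(1) and N0 = assms(2) and eps = assms(3,4) and m = assms(5) and dq = assms(6,7)
  have M0: "M > 0" using M2 by simp
  have M1: "real M - 1 > 0" using M2 by simp
  have Nr: "real N > 0" using N0 by simp
  define V where "V = (real M - 1) / real N"
  define s where "s = (real M - 1) / (real N)\<^sup>2"
  define E where "E n = exp (\<i> * complex_of_real (2 * pi * real_of_int dq * real n / real N))" for n
  define W where "W C = lambda_coef M N C m dq - (if dq = 0 then 1 else 0)" for C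
  define z where "z a = (if a = m then 1 else 0 :: real)" for a
  define Y where "Y k a = complex_of_real (real M / real N * (z a - 1 / real M)) * E k" for k a
  define c where "c a = (if a = m then (real M - 1) / real N else 1 / real N)" for a
  define f where "f C = cmod (W C)" for C
  define l where "l = \<epsilon> / (2 * V)"
  have Vpos: "V > 0" unfolding V_def using M1 Nr by simp
  have spos: "s > 0" unfolding s_def using M1 Nr by simp
  have Ns: "real N * s = V" unfolding s_def V_def using Nr by (simp add: power2_eq_square)
  have lpos: "l > 0" unfolding l_def using Vpos eps by simp
  have sig: "sigma_bar M N C m dq = f C" for C
    unfolding sigma_bar_def f_def W_def by (cases "dq = 0") auto
  have zeta_z: "zeta C n m = z (C n)" for C n unfolding zeta_def z_def by simp
  have Wupd: "W (C(k := b)) - Y k b = W C - Y k (C k)" if k: "k < N" for C k b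
  proof -
    have "W (C(k := b)) = W C + complex_of_real (real M / real N) * (complex_of_real (z b) - complex_of_real (z (C k))) * E k"
      unfolding W_def lambda_upd[OF k] E_def zeta_z by simp
    then show ?thesis unfolding Y_def by (simp add: algebra_simps)
  qed
  have normE: "cmod (E k) = 1" for k unfolding E_def by simp
  have cY: "cmod (Y k a) = c a" for k a
  proof -
    have Yn: "cmod (Y k a) = \<bar>real M / real N * (z a - 1 / real M)\<bar>"
      unfolding Y_def norm_mult norm_of_real normE by simp
    show ?thesis
    proof (cases "a = m")
      case True
      have "real M / real N * (1 - 1 / real M) = (real M - 1) / real N" using M0 Nr by (simp add: field_simps)
      then show ?thesis unfolding Yn c_def z_def using True M1 Nr by simp
    next
      case False
      have "real M / real N * (0 - 1 / real M) = - (1 / real N)" using M0 Nr by (simp add: field_simps)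
      then show ?thesis unfolding Yn c_def z_def using False Nr by simp
    qed
  qed
  have c_bnd: "0 \<le> c a \<and> c a \<le> V" for a
  proof -
    have "1 / real N \<le> (real M - 1) / real N" using M2 Nr by (simp add: divide_right_mono)
    then show ?thesis unfolding c_def V_def using M1 Nr by auto
  qed
  have c_mean: "mean M (\<lambda>a. (c a)\<^sup>2) = s"
  proof -
    have "(\<lambda>a. (c a)\<^sup>2) = (\<lambda>a. if a = m then ((real M - 1) / real N)\<^sup>2 else (1 / real N)\<^sup>2)"
      unfolding c_def by auto
    have "(\<Sum>a<M. (c a)\<^sup>2) = ((real M - 1) / real N)\<^sup>2 + real (M - 1) * (1 / real N)\<^sup>2"
      unfolding \<open>(\<lambda>a. (c a)\<^sup>2) = _\<close> by (rule sum_if_eq[OF m])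
    also have "\<dots> = real M * s" unfolding s_def using M0 Nr
      by (simp add: of_nat_diff power2_eq_square field_simps)
    finally show ?thesis unfolding mean_def using M0 by simp
  qed
  have avg_z: "avg M N (\<lambda>C. complex_of_real (z (C n)) * E n) = E n / of_nat M" if n: "n < N" for n
  proof -
    have "avg M N (\<lambda>C. complex_of_real (z (C n)) * E n) = E n * avg M N (\<lambda>C. complex_of_real (z (C n)))"
      using avg_cmult[of M N "E n" "\<lambda>C. complex_of_real (z (C n))"] by (simp add: mult.commute)
    also have "avg M N (\<lambda>C. complex_of_real (z (C n))) = mean M (\<lambda>a. complex_of_real (z a))"
      by (rule avg_coord[OF M0 n])
    also have "mean M (\<lambda>a. complex_of_real (z a)) = 1 / of_nat M"
    proof -
      have "(\<lambda>a. complex_of_real (z a)) = (\<lambda>a. if a = m then 1 else 0)"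
        unfolding z_def by auto
      moreover have "mean M (\<lambda>a. if a = m then 1 else 0) = (1::complex) / of_nat M"
        unfolding mean_def using m by (simp add: sum.delta)
      ultimately show ?thesis by simp
    qed
    finally show ?thesis by simp
  qed
  have avg_lam: "avg M N (\<lambda>C. lambda_coef M N C m dq) = (\<Sum>n<N. E n) / of_nat N"
  proof -
    have "avg M N (\<lambda>C. lambda_coef M N C m dq) =
          avg M N (\<lambda>C. complex_of_real (real M / real N) * (\<Sum>n<N. complex_of_real (z (C n)) * E n))"
      unfolding lambda_coef_def zeta_z E_def by (rule refl)
    also have "\<dots> = complex_of_real (real M / real N) * avg M N (\<lambda>C. \<Sum>n<N. complex_of_real (z (C n)) * E n)"
      by (rule avg_cmult)
    also have "avg M N (\<lambda>C. \<Sum>n<N. complex_of_real (z (C n)) * E n) = (\<Sum>n<N. avg M N (\<lambda>C. complex_of_real (z (C n)) * E n))"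
      by (rule avg_sum)
    also have "\<dots> = (\<Sum>n<N. E n / of_nat M)"
      using avg_z by simp
    also have "complex_of_real (real M / real N) * (\<Sum>n<N. E n / of_nat M) = (\<Sum>n<N. E n) / of_nat N"
      using M0 by (simp add: sum_divide_distrib[symmetric] field_simps)
    finally show ?thesis .
  qed
  have sumE: "(\<Sum>n<N. E n) = (if dq = 0 then of_nat N else 0)"
  proof (cases "dq = 0")
    case True then show ?thesis unfolding E_def by simp
  next
    case False
    have "real_of_int dq \<le> real N / 2" using dq(2) by linarith
    then have "dq < int N" using Nr by linarith
    then show ?thesis unfolding E_def using geom_zero[OF N0, of dq] False dq(1) by simp
  qed
  have EW: "avg M N W = 0"
  proof -
    have "avg M N W = avg M N (\<lambda>C. lambda_coef M N C m dq) - avg M N (\<lambda>_. if dq = 0 then 1 else 0)"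
      unfolding W_def by (rule avg_diff)
    then show ?thesis using avg_lam sumE N0 M0 by (simp add: avg_const)
  qed
  have var: "avg M N (\<lambda>C. (cmod (W C - avg M N W))\<^sup>2) \<le> real N * s"
  proof (rule var_bound[OF M0 eq_refl[OF c_mean]])
    show "\<forall>k<N. \<exists>h. (\<forall>C\<in>PS M N. \<forall>b<M. h (C(k := b)) = h C) \<and>
                         (\<forall>C\<in>PS M N. cmod (W C - h C) \<le> c (C k))"
    proof (intro allI impI)
      fix k assume k: "k < N"
      show "\<exists>h. (\<forall>C\<in>PS M N. \<forall>b<M. h (C(k := b)) = h C) \<and>
                         (\<forall>C\<in>PS M N. cmod (W C - h C) \<le> c (C k))"
        by (rule exI[of _ "\<lambda>C. W C - Y k (C k)"]) (simp add: Wupd[OF k] cY)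
    qed
  qed
  have Ef: "avg M N f \<le> sqrt V"
  proof -
    have "(\<Sum>C\<in>PS M N. f C)\<^sup>2 \<le> (\<Sum>C\<in>PS M N. (f C)\<^sup>2) * real (M ^ N)"
      using sum_squared_le_sum_of_squares[of f "PS M N"] by (simp add: card_PS)
    then have "(avg M N f)\<^sup>2 \<le> avg M N (\<lambda>C. (f C)\<^sup>2)"
      unfolding avg_def using M0 by (simp add: power_divide field_simps power2_eq_square)
    also have "avg M N (\<lambda>C. (f C)\<^sup>2) = avg M N (\<lambda>C. (cmod (W C - avg M N W))\<^sup>2)"
      unfolding EW f_def by simp
    also have "\<dots> \<le> V" using var Ns by simp
    finally have "sqrt ((avg M N f)\<^sup>2) \<le> sqrt V" by (rule real_sqrt_le_mono)
    then show ?thesis by simp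
  qed
  have mgf: "avg M N (\<lambda>C. exp (l * (f C - avg M N f))) \<le> (1 + l\<^sup>2 * s) ^ N"
  proof (rule mgf_bound[OF M0 c_bnd eq_refl[OF c_mean]])
    show "0 \<le> l" using lpos by simp
    show "2 * l * V \<le> 1" unfolding l_def using Vpos eps by simp
    show "\<forall>k<N. \<exists>h. (\<forall>C\<in>PS M N. \<forall>b<M. h (C(k := b)) = h C) \<and>
                         (\<forall>C\<in>PS M N. \<bar>f C - h C\<bar> \<le> c (C k))"
    proof (intro allI impI)
      fix k assume k: "k < N"
      show "\<exists>h. (\<forall>C\<in>PS M N. \<forall>b<M. h (C(k := b)) = h C) \<and>
                         (\<forall>C\<in>PS M N. \<bar>f C - h C\<bar> \<le> c (C k))"
      proof (rule exI[of _ "\<lambda>C. cmod (W C - Y k (C k))"], intro conjI ballI allI impI)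
        fix C b show "cmod (W (C(k := b)) - Y k ((C(k := b)) k)) = cmod (W C - Y k (C k))"
          using Wupd[OF k, of C b] by simp
      next
        fix C
        have "\<bar>f C - cmod (W C - Y k (C k))\<bar> \<le> cmod (W C - (W C - Y k (C k)))"
          unfolding f_def by (rule norm_triangle_ineq3)
        then show "\<bar>f C - cmod (W C - Y k (C k))\<bar> \<le> c (C k)" using cY by simp
      qed
    qed
  qed
  define S where "S = {C. sigma_bar M N C m dq > sqrt ((real M - 1) / real N) + \<epsilon>}"
  have PSne: "PS M N \<noteq> {}" using card_PS[of M N] M0 by (metis card.empty power_not_zero not_gr0)
  have prob: "measure_pmf.prob (code_pmf M N) S = real (card (PS M N \<inter> S)) / real (M ^ N)"
    unfolding code_pmf_def PS_def[symmetric] using measure_pmf_of_set[OF PSne finite_PS] by (simp add: card_PS)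
  have "real (card (PS M N \<inter> S)) = (\<Sum>C\<in>PS M N \<inter> S. 1)" by simp
  also have "\<dots> \<le> (\<Sum>C\<in>PS M N \<inter> S. exp (l * (f C - avg M N f - \<epsilon>)))"
  proof (rule sum_mono)
    fix C assume "C \<in> PS M N \<inter> S"
    then have "f C > sqrt V + \<epsilon>" unfolding S_def V_def sig by simp
    then have "f C - avg M N f - \<epsilon> \<ge> 0" using Ef by simp
    then have "l * (f C - avg M N f - \<epsilon>) \<ge> 0" using lpos by simp
    then show "1 \<le> exp (l * (f C - avg M N f - \<epsilon>))" by simp
  qed
  also have "\<dots> \<le> (\<Sum>C\<in>PS M N. exp (l * (f C - avg M N f - \<epsilon>)))"
    by (rule sum_mono2) auto
  also have "\<dots> = exp (- l * \<epsilon>) * (\<Sum>C\<in>PS M N. exp (l * (f C - avg M N f)))"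
    by (simp add: sum_distrib_left exp_add[symmetric] algebra_simps)
  also have "\<dots> = exp (- l * \<epsilon>) * (real (M ^ N) * avg M N (\<lambda>C. exp (l * (f C - avg M N f))))"
    unfolding avg_def using M0 by simp
  finally have cardb: "real (card (PS M N \<inter> S)) / real (M ^ N) \<le> exp (- l * \<epsilon>) * avg M N (\<lambda>C. exp (l * (f C - avg M N f)))"
    using M0 by (simp add: divide_le_eq mult.commute mult.left_commute)
  also have "\<dots> \<le> exp (- l * \<epsilon>) * (1 + l\<^sup>2 * s) ^ N"
    using mgf by simp
  also have "\<dots> < exp (- l * \<epsilon>) * (exp (l\<^sup>2 * s)) ^ N"
  proof -
    have "1 + l\<^sup>2 * s < exp (l\<^sup>2 * s)" using lpos spos by (intro one_plus_less_exp) simp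
    then have "(1 + l\<^sup>2 * s) ^ N < (exp (l\<^sup>2 * s)) ^ N"
      using N0 lpos spos by (intro power_strict_mono) (auto intro: add_nonneg_nonneg)
    then show ?thesis by simp
  qed
  also have "\<dots> = exp (- (real N / (4 * (real M - 1))) * \<epsilon>\<^sup>2)"
  proof -
    have "(exp (l\<^sup>2 * s)) ^ N = exp (real N * (l\<^sup>2 * s))" by (simp add: exp_of_nat_mult[symmetric])
    moreover have "- l * \<epsilon> + real N * (l\<^sup>2 * s) = - (real N / (4 * (real M - 1))) * \<epsilon>\<^sup>2"
    proof -
      have e0: "real N * (l\<^sup>2 * s) = l\<^sup>2 * V" using Ns by (simp add: algebra_simps)
      have e1: "l\<^sup>2 * V = \<epsilon>\<^sup>2 / (4 * V)" unfolding l_def using Vpos by (simp add: power2_eq_square field_simps)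
      have e2: "l * \<epsilon> = \<epsilon>\<^sup>2 / (2 * V)" unfolding l_def by (simp add: power2_eq_square)
      have e3: "real N / (4 * (real M - 1)) = 1 / (4 * V)" unfolding V_def using Nr M1 by (simp add: field_simps)
      have "- l * \<epsilon> + real N * (l\<^sup>2 * s) = - (\<epsilon>\<^sup>2 / (2 * V)) + \<epsilon>\<^sup>2 / (4 * V)"
        using e0 e1 e2 by simp
      also have "\<dots> = - (1 / (4 * V)) * \<epsilon>\<^sup>2" using Vpos by (simp add: field_simps)
      also have "\<dots> = - (real N / (4 * (real M - 1))) * \<epsilon>\<^sup>2" using e3 by simp
      finally show ?thesis .
    qed
    ultimately show ?thesis by (simp add: exp_add[symmetric])
  qed
  finally show ?thesis using prob unfolding S_def by simp
qed

end
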